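(* For any time warp $f$ and $m\in\omega^+$, $f^\star(m)=\bigwedge\{p(n)\mid n\in\omega^+\text{ and } m\le f(n)\}$ (where the meet of the empty set is $\omega$).
   Context: Let $\omega^+=\omega\cup\{\omega\}$ with its natural order. A time warp is a join-preserving map $f\colon\omega^+\to\omega^+$ (equivalently order-preserving with $f(0)=0$ and $f(\omega)=\bigvee_{n\in\omega}f(n)$); time warps are ordered pointwise. $p$ is the time warp $p(m)=\bigvee\{k\in\omega\mid k<m\}$ (so $p(0)=0$, $p(\omega)=\omega$, $p(m)=m-1$ otherwise), and $f^\star$ is the largest time warp $h$ with $f\circ h\le p$. *)

theory Defs
  imports Main "HOL-Library.Extended_Nat"
begin

text \<open>omega^+ is modelled by enat (enat n for n in omega, and \<infinity> for omega).
  A time warp is a join-preserving (all joins, including the empty one) map.\<close>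

definition time_warp :: "(enat \<Rightarrow> enat) \<Rightarrow> bool" where
  "time_warp f \<longleftrightarrow> (\<forall>A. f (Sup A) = Sup (f ` A))"

definition pw :: "enat \<Rightarrow> enat" where
  "pw m = Sup {enat k | k. enat k < m}"

definition star :: "(enat \<Rightarrow> enat) \<Rightarrow> (enat \<Rightarrow> enat)" where
  "star f = (GREATEST h. time_warp h \<and> f \<circ> h \<le> pw)"

end

theory Submission
  imports Defs
begin

lemma pw_eq: "pw m = m - 1"
proof (cases m)
  case (enat k)
  show ?thesis
  proof (cases k)
    case 0
    then show ?thesis using enat by (simp add: pw_def bot_enat_def zero_enat_def)
  next
    case (Suc j)
    have S: "{enat i | i. enat i < m} = enat ` {..j}" using enat Suc by auto
    have "Sup (enat ` {..j}) = enat j"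
      unfolding Sup_enat_def by (auto intro!: Max_eqI)
    then show ?thesis using S enat Suc by (simp add: pw_def one_enat_def)
  qed
next
  case infinity
  have "{enat k | k. enat k < m} = range enat" using infinity by auto
  then show ?thesis using infinity
    by (simp add: pw_def Sup_enat_def finite_range_imageI infinite_UNIV_nat)
       (metis finite_imageD infinite_UNIV_nat inj_on_def enat.inject)
qed

lemma Sup_range_enat: "Sup (range enat) = \<infinity>"
  unfolding Sup_enat_def
  by (auto dest: finite_imageD simp: inj_on_def)

lemma tw_mono: "time_warp f \<Longrightarrow> mono f"
proof (rule monoI)
  fix x y :: enat assume tw: "time_warp f" and xy: "x \<le> y"
  have "f (Sup {x, y}) = Sup (f ` {x, y})" using tw unfolding time_warp_def by blast
  moreover have "Sup {x, y} = y" using xy by (simp add: sup_absorb2)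
  moreover have "Sup (f ` {x, y}) = sup (f x) (f y)" by simp
  ultimately show "f x \<le> f y" by (metis sup.orderI sup_ge1)
qed

lemma tw_zero: "time_warp f \<Longrightarrow> f 0 = 0"
  unfolding time_warp_def by (metis Sup_empty bot_enat_def image_empty)

lemma tw_inf: "time_warp f \<Longrightarrow> f \<infinity> = (SUP k. f (enat k))"
  unfolding time_warp_def by (metis Sup_range_enat image_image)

lemma tw_intro:
  assumes m: "mono h" and z: "h 0 = 0" and i: "h \<infinity> \<le> (SUP k. h (enat k))"
  shows "time_warp h"
  unfolding time_warp_def
proof
  fix A :: "enat set"
  show "h (Sup A) = Sup (h ` A)"
  proof (cases "A = {}")
    case True then show ?thesis using z by (simp add: bot_enat_def)
  next
    case ne: False
    show ?thesis
    proof (cases "finite A")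
      case True
      then have "Sup A = Max A" "Sup (h ` A) = Max (h ` A)" using ne by (simp_all add: Sup_enat_def)
      then show ?thesis using ne m True by (metis mono_Max_commute)
    next
      case inf: False
      have SA: "Sup A = \<infinity>" by (subst Sup_enat_def) (simp only: ne inf if_False)
      have le: "Sup (h ` A) \<le> h \<infinity>" by (rule SUP_least, rule monoD[OF m], simp)
      have "h (enat k) \<le> Sup (h ` A)" for k
      proof -
        have "\<not> (\<forall>y\<in>A. y \<le> enat k)"
          using inf finite_enat_bounded by blast
        then obtain a where a: "a \<in> A" "enat k \<le> a" by (auto simp: not_le intro: less_imp_le)
        have "h (enat k) \<le> h a" using a(2) by (rule monoD[OF m])
        then show ?thesis using a(1) by (meson SUP_upper order_trans)
      qed
      then have "(SUP k. h (enat k)) \<le> Sup (h ` A)" by (auto intro!: SUP_least)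
      then show ?thesis using SA le i by auto
    qed
  qed
qed

lemma enat_all_le: assumes a: "\<And>k. enat k \<le> x" shows "x = \<infinity>"
proof (cases x)
  case (enat n)
  have "enat (Suc n) \<le> x" by (rule a)
  then show ?thesis using enat by simp
qed simp

lemma g_tw:
  assumes f: "time_warp f"
  shows "time_warp (\<lambda>m. Inf {pw n | n. m \<le> f n})" (is "time_warp ?g")
proof (rule tw_intro)
  show "mono ?g"
  proof (rule monoI, rule Inf_superset_mono)
    fix x y :: enat assume "x \<le> y"
    then show "{pw n | n. y \<le> f n} \<subseteq> {pw n | n. x \<le> f n}"
      using order_trans[of x y] by blast
  qed
  have "pw 0 \<in> {pw n | n. 0 \<le> f n}" by auto
  then have "?g 0 \<le> pw 0" by (rule Inf_lower)
  then show "?g 0 = 0" by (simp add: pw_eq)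
  show "?g \<infinity> \<le> (SUP k. ?g (enat k))"
  proof (cases "(SUP k. ?g (enat k))")
    case infinity then show ?thesis by simp
  next
    case (enat s)
    have "enat k \<le> f (enat (Suc s))" for k
    proof -
      have "?g (enat k) \<le> (SUP k. ?g (enat k))" by (rule SUP_upper) simp
      then have "?g (enat k) \<le> enat s" using enat by simp
      moreover have "enat s < enat (Suc s)" by simp
      ultimately have "?g (enat k) < enat (Suc s)" by (rule le_less_trans)
      then have "\<exists>y\<in>{pw n | n. enat k \<le> f n}. y < enat (Suc s)" by (simp only: Inf_less_iff)
      then obtain n where n: "enat k \<le> f n" "pw n < enat (Suc s)"
        by blast
      have "n \<le> enat (Suc s)" using n(2) unfolding pw_eq
        by (cases n) (auto simp: one_enat_def)
      then have "f n \<le> f (enat (Suc s))" by (rule monoD[OF tw_mono[OF f]])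
      then show ?thesis using n(1) by simp
    qed
    then have "f (enat (Suc s)) = \<infinity>" by (rule enat_all_le)
    then have "pw (enat (Suc s)) \<in> {pw n | n. \<infinity> \<le> f n}" by auto
    then have "?g \<infinity> \<le> pw (enat (Suc s))" by (rule Inf_lower)
    then show ?thesis using enat by (simp add: pw_eq one_enat_def)
  qed
qed

lemma g_below:
  assumes f: "time_warp f"
  shows "f (Inf {pw n | n. m \<le> f n}) \<le> pw m"
proof -
  define x where "x = Inf {pw n | n. m \<le> f n}"
  have "f x \<le> pw m"
  proof (cases m)
    case infinity then show ?thesis by (simp add: pw_eq)
  next
    case (enat k)
    show ?thesis
    proof (cases k)
      case 0
      have "pw 0 \<in> {pw n | n. m \<le> f n}" using enat 0 tw_zero[OF f] by (auto simp: zero_enat_def)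
      then have "x \<le> 0" unfolding x_def by (metis Inf_lower pw_eq diff_zero zero_enat_def idiff_0)
      then show ?thesis using tw_zero[OF f] by simp
    next
      case (Suc j)
      have "f x < m"
      proof (rule ccontr)
        assume "\<not> f x < m"
        then have mx: "m \<le> f x" by simp
        then have "x \<le> pw x" unfolding x_def by (auto intro: Inf_lower)
        then have x01: "x = 0 \<or> x = \<infinity>" unfolding pw_eq
          by (cases x) (auto simp: one_enat_def zero_enat_def)
        show False
        proof (cases "x = 0")
          case True then show False using mx tw_zero[OF f] enat Suc by (simp add: zero_enat_def)
        next
          case False
          then have "x = \<infinity>" using x01 by simp
          then have "enat (Suc j) \<le> (SUP i. f (enat i))" using mx tw_inf[OF f] enat Suc by simp
          moreover have "enat j < enat (Suc j)" by simp
          ultimately have "enat j < (SUP i. f (enat i))" by (rule less_le_trans[rotated])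
          then obtain i where "enat j < f (enat i)" by (auto simp: less_SUP_iff)
          then have "m \<le> f (enat i)" using enat Suc by (cases "f (enat i)") auto
          then have "x \<le> pw (enat i)" unfolding x_def by (auto intro: Inf_lower)
          then show False using \<open>x = \<infinity>\<close> by (simp add: pw_eq one_enat_def)
        qed
      qed
      then show ?thesis using enat Suc by (cases "f x") (auto simp: pw_eq one_enat_def)
    qed
  qed
  then show ?thesis by (simp add: x_def)
qed

lemma g_max:
  assumes f: "time_warp f" and h: "time_warp h" and hb: "f \<circ> h \<le> pw"
  shows "h m \<le> Inf {pw n | n. m \<le> f n}"
proof (rule Inf_greatest)
  fix y assume "y \<in> {pw n | n. m \<le> f n}"
  then obtain n where y: "y = pw n" and mn: "m \<le> f n" by auto
  have fin: "h (enat k) \<le> pw n" if kn: "enat k \<le> f n" for k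
  proof (rule ccontr)
    assume "\<not> h (enat k) \<le> pw n"
    then have lt: "pw n < h (enat k)" by simp
    show False
    proof (cases n)
      case infinity then show False using lt by (simp add: pw_eq)
    next
      case (enat j)
      show False
      proof (cases j)
        case 0
        then have "enat k \<le> 0" using kn enat tw_zero[OF f] by (simp add: zero_enat_def)
        then have "h (enat k) = 0" using tw_zero[OF h] by (simp add: zero_enat_def)
        then show False using lt by simp
      next
        case (Suc i)
        then have "n \<le> h (enat k)" using lt enat by (cases "h (enat k)") (auto simp: pw_eq one_enat_def)
        then have "f n \<le> f (h (enat k))" by (rule monoD[OF tw_mono[OF f]])
        moreover have "f (h (enat k)) \<le> pw (enat k)" using hb by (simp add: le_fun_def)
        ultimately have "enat k \<le> pw (enat k)" using kn by simp
        moreover have "k \<noteq> 0"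
        proof
          assume "k = 0"
          then have "h (enat k) = 0" using tw_zero[OF h] by (simp add: zero_enat_def)
          then show False using lt by simp
        qed
        ultimately show False by (simp add: pw_eq one_enat_def)
      qed
    qed
  qed
  show "h m \<le> y"
  proof (cases m)
    case (enat k) then show ?thesis using fin mn y by simp
  next
    case infinity
    have "h m = (SUP k. h (enat k))" using tw_inf[OF h] infinity by simp
    also have "\<dots> \<le> pw n" using fin mn infinity by (auto intro!: SUP_least)
    finally show ?thesis using y by simp
  qed
qed

theorem lemma2p3:
  fixes f :: "enat \<Rightarrow> enat" and m :: enat
  assumes "time_warp f"
  shows "star f m = Inf {pw n | n. m \<le> f n}"
proof -
  have "star f = (\<lambda>m. Inf {pw n | n. m \<le> f n})"
    unfolding star_def
  proof (rule Greatest_equality)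
    show "time_warp (\<lambda>m. Inf {pw n | n. m \<le> f n}) \<and> f \<circ> (\<lambda>m. Inf {pw n | n. m \<le> f n}) \<le> pw"
      using g_tw[OF assms] g_below[OF assms] by (auto simp: le_fun_def)
    fix y assume "time_warp y \<and> f \<circ> y \<le> pw"
    then show "y \<le> (\<lambda>m. Inf {pw n | n. m \<le> f n})"
      using g_max[OF assms] by (auto simp: le_fun_def)
  qed
  then show ?thesis by simp
qed

end
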